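(* Let $n$ be sufficiently large, let $f\colon\{0,1\}^n\to\{0,1\}$, let $\widetilde{\epsilon}>0$, let $t,r\in[\Lambda]$ with $t\ge r$, and let $H$ be a power of $2$ with $H=O(n/\widetilde{\epsilon}^2)$ and $H2^t\ge\sqrt n$, $H2^r\ge\sqrt n$. Let $I\subseteq[n]$ be nonempty with $|I|\ge H\widetilde{\epsilon}^2/2$, and suppose every $i\in I$ satisfies \[\min\{\mathrm{Score}_i^+,\mathrm{Score}_i^-\}=\min\Big\{\mathrm{Score}^+_{i,t}\cdot\tfrac{2^t}{\sqrt n},\ \mathrm{Score}^-_{i,r}\cdot\tfrac{2^r}{\sqrt n}\Big\}\in\big[1/H,\,2/H\big].\] Let $\alpha=|I|2^t/n$ and $\beta=|I|2^r/n$, and assume $\alpha\ge\log^2 n$. Let $\boldsymbol S$ be a uniformly random subset of $[n]$ of size $2^t$, and let $\boldsymbol I_{\boldsymbol S}\subseteq I\cap\boldsymbol S$ be the set of $i\in I\cap\boldsymbol S$ such that $\boldsymbol S$ is $i$-informative. Then $\alpha/10\le|\boldsymbol I_{\boldsymbol S}|\le 4\alpha$ with probability $\Omega(1)$ (i.e. at least some absolute positive constant).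
   Context: For $x\in\{0,1\}^n$ and $i\in[n]$, $x^{(i)}$ denotes $x$ with its $i$th bit flipped. An edge $(x,x^{(i)})$ is monotone if $f$ strictly increases along it in direction $i$ and anti-monotone if $f$ strictly decreases along it; $E_i^+$, $E_i^-$ denote the monotone and anti-monotone edges in direction $i$. $\textsc{AE-Search}$ is a fixed randomized query procedure that, on input $x\in\{0,1\}^n$ and $S\subseteq[n]$, outputs either an index in $S$ or nothing. $\Lambda=O(\log n)$ is a fixed positive integer parameter with $2^j\le n$ for $j\in[\Lambda]$. $\mathcal{P}_{i,j}$ is the family of subsets of $[n]\setminus\{i\}$ of size $2^j-1$. A pair $(x,S)$ with $S\subseteq[n]\setminus\{i\}$ is a good pair for $E_i^+$ (resp. $E_i^-$) if $(x,x^{(i)})$ is a monotone (resp. anti-monotone) edge and $\textsc{AE-Search}(x,S\cup\{i\})$ returns $i$ with probability at least $1/2$. $\mathrm{GoodFrac}_i^\pm(S)$ is the fraction of $x\in\{0,1\}^n$ such that $(x,S)$ is good for $E_i^\pm$. A point $x$ is $j$-strong for $E_i^\pm$ if $(x,S)$ is good for $E_i^\pm$ for at least $3/4$ of $S\in\mathcal{P}_{i,j}$; $\mathrm{Score}^\pm_{i,j}$ is the fraction of $x$ that are $j$-strong for $E_i^\pm$, and $\mathrm{Score}_i^\pm=\max_{j\in[\Lambda]}\mathrm{Score}^\pm_{i,j}\cdot2^j/\sqrt n$. A set $S'\in\mathcal{P}_{i,t}$ is informative for the $i$th coordinate if (1) $\mathrm{GoodFrac}_i^+(S')\ge0.1\,\widetilde{\epsilon}^2/(\alpha\sqrt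 n)$ and (2) at least a $0.1$ fraction of the $(2^r-1)$-sized subsets $T\subseteq S'$ satisfy $\mathrm{GoodFrac}_i^-(T)\ge0.1\,\widetilde{\epsilon}^2/(\beta\sqrt n)$. A set $S$ of size $2^t$ containing $i$ is $i$-informative if $S\setminus\{i\}$ is informative for the $i$th coordinate. Logarithms are base $2$. *)

theory Defs
  imports "HOL-Probability.Probability"
begin

text \<open>Points of the cube {0,1}^n are encoded as subsets of {..<n} (the set of
coordinates equal to 1); coordinates are indexed by [n] = {..<n}. A Boolean
function is f :: nat set => bool (False = 0, True = 1). The randomized procedure
Srch-Search (for the fixed f) is an abstract map Srch x S giving the output
distribution, an option: Some i (an index) or None (nothing).
The sign flag s is True for the monotone (+) case, False for the anti-monotone (-) case.\<close>

definition cube :: "nat \<Rightarrow> nat set set" where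
  "cube n = Pow {..<n}"

definition flip :: "nat set \<Rightarrow> nat \<Rightarrow> nat set" where
  "flip x i = (if i \<in> x then x - {i} else insert i x)"

definition mono_edge :: "(nat set \<Rightarrow> bool) \<Rightarrow> nat set \<Rightarrow> nat \<Rightarrow> bool" where
  "mono_edge f x i \<longleftrightarrow> \<not> f (x - {i}) \<and> f (insert i x)"

definition anti_edge :: "(nat set \<Rightarrow> bool) \<Rightarrow> nat set \<Rightarrow> nat \<Rightarrow> bool" where
  "anti_edge f x i \<longleftrightarrow> f (x - {i}) \<and> \<not> f (insert i x)"

definition signed_edge :: "bool \<Rightarrow> (nat set \<Rightarrow> bool) \<Rightarrow> nat set \<Rightarrow> nat \<Rightarrow> bool" where
  "signed_edge s f x i = (if s then mono_edge f x i else anti_edge f x i)"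

definition good_pair ::
  "nat \<Rightarrow> (nat set \<Rightarrow> bool) \<Rightarrow> (nat set \<Rightarrow> nat set \<Rightarrow> nat option pmf) \<Rightarrow> bool
   \<Rightarrow> nat \<Rightarrow> nat set \<Rightarrow> nat set \<Rightarrow> bool" where
  "good_pair n f Srch s i x S \<longleftrightarrow>
     S \<subseteq> {..<n} - {i} \<and> signed_edge s f x i \<and> pmf (Srch x (insert i S)) (Some i) \<ge> 1/2"

definition good_frac ::
  "nat \<Rightarrow> (nat set \<Rightarrow> bool) \<Rightarrow> (nat set \<Rightarrow> nat set \<Rightarrow> nat option pmf) \<Rightarrow> bool
   \<Rightarrow> nat \<Rightarrow> nat set \<Rightarrow> real" where
  "good_frac n f Srch s i S = real (card {x \<in> cube n. good_pair n f Srch s i x S}) / 2 ^ n"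

definition Pfam :: "nat \<Rightarrow> nat \<Rightarrow> nat \<Rightarrow> nat set set" where
  "Pfam n i j = {S. S \<subseteq> {..<n} - {i} \<and> card S = 2 ^ j - 1}"

definition strong ::
  "nat \<Rightarrow> (nat set \<Rightarrow> bool) \<Rightarrow> (nat set \<Rightarrow> nat set \<Rightarrow> nat option pmf) \<Rightarrow> bool
   \<Rightarrow> nat \<Rightarrow> nat \<Rightarrow> nat set \<Rightarrow> bool" where
  "strong n f Srch s i j x \<longleftrightarrow>
     real (card {S \<in> Pfam n i j. good_pair n f Srch s i x S}) \<ge> 3/4 * real (card (Pfam n i j))"

definition score_ij ::
  "nat \<Rightarrow> (nat set \<Rightarrow> bool) \<Rightarrow> (nat set \<Rightarrow> nat set \<Rightarrow> nat option pmf) \<Rightarrow> bool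
   \<Rightarrow> nat \<Rightarrow> nat \<Rightarrow> real" where
  "score_ij n f Srch s i j = real (card {x \<in> cube n. strong n f Srch s i j x}) / 2 ^ n"

definition score_i ::
  "nat \<Rightarrow> nat \<Rightarrow> (nat set \<Rightarrow> bool) \<Rightarrow> (nat set \<Rightarrow> nat set \<Rightarrow> nat option pmf) \<Rightarrow> bool
   \<Rightarrow> nat \<Rightarrow> real" where
  "score_i n \<Lambda> f Srch s i = Max ((\<lambda>j. score_ij n f Srch s i j * 2 ^ j / sqrt n) ` {1..\<Lambda>})"

definition informative ::
  "nat \<Rightarrow> (nat set \<Rightarrow> bool) \<Rightarrow> (nat set \<Rightarrow> nat set \<Rightarrow> nat option pmf)
   \<Rightarrow> real \<Rightarrow> real \<Rightarrow> real \<Rightarrow> nat \<Rightarrow> nat \<Rightarrow> nat \<Rightarrow> nat set \<Rightarrow> bool" where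
  "informative n f Srch eps \<alpha> \<beta> t r i S' \<longleftrightarrow>
     S' \<in> Pfam n i t \<and>
     good_frac n f Srch True i S' \<ge> 0.1 * eps\<^sup>2 / (\<alpha> * sqrt n) \<and>
     real (card {T. T \<subseteq> S' \<and> card T = 2 ^ r - 1 \<and>
                    good_frac n f Srch False i T \<ge> 0.1 * eps\<^sup>2 / (\<beta> * sqrt n)})
       \<ge> 0.1 * real (card {T. T \<subseteq> S' \<and> card T = 2 ^ r - 1})"

definition i_informative ::
  "nat \<Rightarrow> (nat set \<Rightarrow> bool) \<Rightarrow> (nat set \<Rightarrow> nat set \<Rightarrow> nat option pmf)
   \<Rightarrow> real \<Rightarrow> real \<Rightarrow> real \<Rightarrow> nat \<Rightarrow> nat \<Rightarrow> nat \<Rightarrow> nat set \<Rightarrow> bool" where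
  "i_informative n f Srch eps \<alpha> \<beta> t r i S \<longleftrightarrow>
     i \<in> S \<and> card S = 2 ^ t \<and> informative n f Srch eps \<alpha> \<beta> t r i (S - {i})"

definition informative_set ::
  "nat \<Rightarrow> (nat set \<Rightarrow> bool) \<Rightarrow> (nat set \<Rightarrow> nat set \<Rightarrow> nat option pmf)
   \<Rightarrow> real \<Rightarrow> real \<Rightarrow> real \<Rightarrow> nat \<Rightarrow> nat \<Rightarrow> nat set \<Rightarrow> nat set \<Rightarrow> nat set" where
  "informative_set n f Srch eps \<alpha> \<beta> t r I S =
     {i \<in> I \<inter> S. i_informative n f Srch eps \<alpha> \<beta> t r i S}"

end

theory Submission
  imports Defs
begin


lemma card_filter_sum:
  assumes "finite B"
  shows "real (card {y\<in>B. P y}) = (\<Sum>y\<in>B. if P y then 1 else 0)"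
  using assms by (simp add: sum.If_cases Int_def conj_commute)

lemma dc:
  assumes "finite A" "finite B"
  shows "(\<Sum>x\<in>A. real (card {y\<in>B. R x y})) = (\<Sum>y\<in>B. real (card {x\<in>A. R x y}))"
  using assms by (simp add: card_filter_sum sum.swap[of _ A B])

lemma rev_markov:
  fixes f :: "'a \<Rightarrow> real"
  assumes "finite P" "\<forall>S\<in>P. f S \<le> U" "q * U * real (card P) \<le> (\<Sum>S\<in>P. f S)"
  shows "real (card {S\<in>P. f S < \<theta>}) * (U - \<theta>) \<le> (1 - q) * real (card P) * U"
proof -
  define B where "B = {S\<in>P. f S < \<theta>}"
  have fB: "finite B" "B \<subseteq> P" using assms(1) by (auto simp: B_def)
  have "(\<Sum>S\<in>P. f S) = (\<Sum>S\<in>B. f S) + (\<Sum>S\<in>P - B. f S)"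
    using fB assms(1) by (metis add.commute sum.subset_diff)
  also have "(\<Sum>S\<in>B. f S) \<le> (\<Sum>S\<in>B. \<theta>)" by (rule sum_mono) (auto simp: B_def)
  also have "(\<Sum>S\<in>P-B. f S) \<le> (\<Sum>S\<in>P-B. U)" by (rule sum_mono) (use assms(2) in auto)
  finally have "q * U * real (card P) \<le> real (card B) * \<theta> + real (card (P - B)) * U"
    using assms(3) by simp
  moreover have "real (card (P - B)) = real (card P) - real (card B)"
    using fB assms(1) by (simp add: card_Diff_subset card_mono of_nat_diff)
  ultimately show ?thesis unfolding B_def[symmetric] by (simp add: algebra_simps)
qed

lemma finite_Pfam: "finite (Pfam n i j)"
  by (rule finite_subset[of _ "Pow {..<n}"]) (auto simp: Pfam_def)

lemma finite_cube: "finite (cube n)"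
  by (simp add: cube_def)

lemma frac_bad:
  assumes th: "\<theta> \<le> 0.2 * score_ij n f Srch s i j" and pos: "score_ij n f Srch s i j > 0"
  shows "real (card {S\<in>Pfam n i j. good_frac n f Srch s i S < \<theta>}) \<le> 5/16 * real (card (Pfam n i j))"
proof -
  define P where "P = Pfam n i j"
  define Str where "Str = {x\<in>cube n. strong n f Srch s i j x}"
  define U where "U = real (card Str)"
  define g where "g = (\<lambda>S. real (card {x\<in>Str. good_pair n f Srch s i x S}))"
  have fP: "finite P" by (simp add: P_def finite_Pfam)
  have fStr: "finite Str" "Str \<subseteq> cube n" using finite_cube by (auto simp: Str_def)
  have sc: "score_ij n f Srch s i j = U / 2 ^ n" by (simp add: score_ij_def U_def Str_def)
  have Upos: "U > 0" using pos sc by (simp add: divide_pos_pos zero_less_divide_iff)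
  have thU: "\<theta> * 2 ^ n \<le> 0.2 * U" using th sc by (simp add: field_simps)
  have gU: "\<forall>S\<in>P. g S \<le> U"
    unfolding g_def U_def using fStr by (auto intro: card_mono)
  have "(\<Sum>S\<in>P. g S) = (\<Sum>x\<in>Str. real (card {S\<in>P. good_pair n f Srch s i x S}))"
    unfolding g_def by (rule dc[symmetric]) (use fStr fP in auto)
  also have "\<dots> \<ge> (\<Sum>x\<in>Str. 3/4 * real (card P))"
    by (rule sum_mono) (auto simp: Str_def strong_def P_def)
  finally have sumg: "3/4 * U * real (card P) \<le> (\<Sum>S\<in>P. g S)" by (simp add: U_def)
  have rm: "real (card {S\<in>P. g S < \<theta> * 2 ^ n}) * (U - \<theta> * 2 ^ n) \<le> (1 - 3/4) * real (card P) * U"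
    by (rule rev_markov[OF fP gU sumg])
  have sub: "{S\<in>P. good_frac n f Srch s i S < \<theta>} \<subseteq> {S\<in>P. g S < \<theta> * 2 ^ n}"
  proof safe
    fix S assume "S \<in> P" "good_frac n f Srch s i S < \<theta>"
    then have "real (card {x \<in> cube n. good_pair n f Srch s i x S}) < \<theta> * 2 ^ n"
      by (simp add: good_frac_def field_simps)
    moreover have "g S \<le> real (card {x \<in> cube n. good_pair n f Srch s i x S})"
      unfolding g_def using fStr finite_cube by (auto intro!: card_mono)
    ultimately show "g S < \<theta> * 2 ^ n" by linarith
  qed
  have "real (card {S\<in>P. good_frac n f Srch s i S < \<theta>}) \<le> real (card {S\<in>P. g S < \<theta> * 2 ^ n})"
    using card_mono[OF _ sub] fP by simp
  moreover have "real (card {S\<in>P. g S < \<theta> * 2 ^ n}) * (0.8 * U) \<le> real (card {S\<in>P. g S < \<theta> * 2 ^ n}) * (U - \<theta> * 2 ^ n)"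
    using thU by (intro mult_left_mono) auto
  ultimately have "real (card {S\<in>P. good_frac n f Srch s i S < \<theta>}) * (0.8 * U) \<le> 1/4 * real (card P) * U"
  proof -
    assume a: "real (card {S\<in>P. good_frac n f Srch s i S < \<theta>}) \<le> real (card {S\<in>P. g S < \<theta> * 2 ^ n})"
      and b: "real (card {S\<in>P. g S < \<theta> * 2 ^ n}) * (0.8 * U) \<le> real (card {S\<in>P. g S < \<theta> * 2 ^ n}) * (U - \<theta> * 2 ^ n)"
    have "real (card {S\<in>P. good_frac n f Srch s i S < \<theta>}) * (0.8 * U) \<le> real (card {S\<in>P. g S < \<theta> * 2 ^ n}) * (0.8 * U)"
      using a Upos by (intro mult_right_mono) auto
    moreover have "(1 - 3/4) * real (card P) * U = 1/4 * real (card P) * U" by simp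
    ultimately show ?thesis using b rm by linarith
  qed
  then show ?thesis using Upos unfolding P_def by (simp add: field_simps)
qed

lemma count_super:
  assumes fA: "finite A" and TA: "T \<subseteq> A" and cT: "card T = a" and aM: "a \<le> M"
  shows "card {S. S \<subseteq> A \<and> card S = M \<and> T \<subseteq> S} = (card A - a) choose (M - a)"
proof -
  have fT: "finite T" using fA TA finite_subset by blast
  have "bij_betw (\<lambda>S. S - T) {S. S \<subseteq> A \<and> card S = M \<and> T \<subseteq> S} {U. U \<subseteq> A - T \<and> card U = M - a}"
  proof (rule bij_betw_byWitness[where f' = "\<lambda>U. U \<union> T"])
    show "\<forall>S\<in>{S. S \<subseteq> A \<and> card S = M \<and> T \<subseteq> S}. S - T \<union> T = S" by auto
    show "\<forall>U\<in>{U. U \<subseteq> A - T \<and> card U = M - a}. U \<union> T - T = U" by auto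
    show "(\<lambda>S. S - T) ` {S. S \<subseteq> A \<and> card S = M \<and> T \<subseteq> S} \<subseteq> {U. U \<subseteq> A - T \<and> card U = M - a}"
    proof safe
      fix S assume "S \<subseteq> A" "T \<subseteq> S" "M = card S"
      then show "card (S - T) = card S - a" using cT fT by (simp add: card_Diff_subset)
    qed auto
    show "(\<lambda>U. U \<union> T) ` {U. U \<subseteq> A - T \<and> card U = M - a} \<subseteq> {S. S \<subseteq> A \<and> card S = M \<and> T \<subseteq> S}"
    proof
      fix S assume "S \<in> (\<lambda>U. U \<union> T) ` {U. U \<subseteq> A - T \<and> card U = M - a}"
      then obtain U where U: "U \<subseteq> A - T" "card U = M - a" and SU: "S = U \<union> T" by auto
      have fU: "finite U" using U fA finite_subset by blast
      have "card (U \<union> T) = card U + card T" using U fU fT by (subst card_Un_disjoint) auto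
      then have "card S = M" using cT U aM SU by simp
      then show "S \<in> {S. S \<subseteq> A \<and> card S = M \<and> T \<subseteq> S}" using SU U TA by auto
    qed
  qed
  then have "card {S. S \<subseteq> A \<and> card S = M \<and> T \<subseteq> S} = card {U. U \<subseteq> A - T \<and> card U = M - a}"
    by (rule bij_betw_same_card)
  also have "\<dots> = card (A - T) choose (M - a)" using fA by (simp add: n_subsets)
  also have "card (A - T) = card A - a" using TA cT fT by (simp add: card_Diff_subset)
  finally show ?thesis .
qed

lemma cond2_bad:
  assumes fA: "finite A" and aM: "a \<le> M"
    and Gd: "Gd \<subseteq> {T. T \<subseteq> A \<and> card T = a}"
    and bad: "real (card ({T. T \<subseteq> A \<and> card T = a} - Gd)) \<le> 5/16 * real (card {T. T \<subseteq> A \<and> card T = a})"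
  shows "real (card {S \<in> {S. S \<subseteq> A \<and> card S = M}. real (card {T\<in>Gd. T \<subseteq> S}) < 0.1 * real (card {T. T \<subseteq> S \<and> card T = a})})
           \<le> 25/72 * real (card {S. S \<subseteq> A \<and> card S = M})"
proof -
  define Pr where "Pr = {T. T \<subseteq> A \<and> card T = a}"
  define Pt where "Pt = {S. S \<subseteq> A \<and> card S = M}"
  define K where "K = (card A - a) choose (M - a)"
  define L where "L = M choose a"
  have fPr: "finite Pr" unfolding Pr_def using fA by simp
  have fPt: "finite Pt" unfolding Pt_def using fA by simp
  have fGd: "finite Gd" using Gd fPr finite_subset unfolding Pr_def by blast
  have Lpos: "real L > 0" using aM by (simp add: L_def)
  have cS: "card {T. T \<subseteq> S \<and> card T = a} = L" if "S \<in> Pt" for S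
  proof -
    have "finite S" using that fA finite_subset unfolding Pt_def by blast
    then show ?thesis using that by (simp add: n_subsets L_def Pt_def)
  qed
  have cT: "card {S\<in>Pt. T \<subseteq> S} = K" if "T \<in> Pr" for T
  proof -
    have "{S\<in>Pt. T \<subseteq> S} = {S. S \<subseteq> A \<and> card S = M \<and> T \<subseteq> S}" by (auto simp: Pt_def)
    then show ?thesis using count_super[OF fA _ _ aM, of T] that by (simp add: Pr_def K_def)
  qed
  have eq1: "(\<Sum>S\<in>Pt. real (card {T\<in>Pr. T \<subseteq> S})) = (\<Sum>T\<in>Pr. real (card {S\<in>Pt. T \<subseteq> S}))"
    by (rule dc[OF fPt fPr])
  have "{T\<in>Pr. T \<subseteq> S} = {T. T \<subseteq> S \<and> card T = a}" if "S \<in> Pt" for S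
    using that by (auto simp: Pr_def Pt_def)
  then have "(\<Sum>S\<in>Pt. real (card {T\<in>Pr. T \<subseteq> S})) = real (card Pt) * real L"
    using cS by simp
  moreover have "(\<Sum>T\<in>Pr. real (card {S\<in>Pt. T \<subseteq> S})) = real (card Pr) * real K"
    using cT by simp
  ultimately have PtL: "real (card Pt) * real L = real (card Pr) * real K" using eq1 by simp
  have "(\<Sum>S\<in>Pt. real (card {T\<in>Gd. T \<subseteq> S})) = (\<Sum>T\<in>Gd. real (card {S\<in>Pt. T \<subseteq> S}))"
    by (rule dc[OF fPt fGd])
  also have "\<dots> = (\<Sum>T\<in>Gd. real K)"
    by (rule sum.cong) (use cT Gd in \<open>auto simp: Pr_def\<close>)
  also have "\<dots> = real (card Gd) * real K" by simp
  finally have sGd: "(\<Sum>S\<in>Pt. real (card {T\<in>Gd. T \<subseteq> S})) = real (card Gd) * real K" .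
  have "real (card (Pr - Gd)) = real (card Pr) - real (card Gd)"
    using Gd fPr fGd by (simp add: Pr_def card_Diff_subset card_mono of_nat_diff)
  then have cGd: "real (card Gd) \<ge> 11/16 * real (card Pr)" using bad unfolding Pr_def by simp
  have "11/16 * real L * real (card Pt) = 11/16 * real (card Pr) * real K" using PtL by (simp add: mult.commute)
  also have "\<dots> \<le> real (card Gd) * real K" using cGd by (intro mult_right_mono) auto
  finally have sumg: "11/16 * real L * real (card Pt) \<le> (\<Sum>S\<in>Pt. real (card {T\<in>Gd. T \<subseteq> S}))"
    using sGd by simp
  have gU: "\<forall>S\<in>Pt. real (card {T\<in>Gd. T \<subseteq> S}) \<le> real L"
  proof
    fix S assume S: "S \<in> Pt"
    have "card {T\<in>Gd. T \<subseteq> S} \<le> card {T. T \<subseteq> S \<and> card T = a}"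
    proof (rule card_mono)
      show "finite {T. T \<subseteq> S \<and> card T = a}" using S fA unfolding Pt_def by (metis (mono_tags) Collect_mono PowI Pow_def finite_Pow_iff finite_subset mem_Collect_eq)
    qed (use Gd in auto)
    then show "real (card {T\<in>Gd. T \<subseteq> S}) \<le> real L" using cS[OF S] by simp
  qed
  have rm: "real (card {S\<in>Pt. real (card {T\<in>Gd. T \<subseteq> S}) < 0.1 * real L}) * (real L - 0.1 * real L)
      \<le> (1 - 11/16) * real (card Pt) * real L"
    by (rule rev_markov[OF fPt gU sumg])
  have "{S\<in>Pt. real (card {T\<in>Gd. T \<subseteq> S}) < 0.1 * real (card {T. T \<subseteq> S \<and> card T = a})}
      = {S\<in>Pt. real (card {T\<in>Gd. T \<subseteq> S}) < 0.1 * real L}" using cS by auto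
  then show ?thesis using rm Lpos unfolding Pt_def[symmetric] by (simp add: field_simps)
qed

lemma Pfam_alt: "Pfam n i j = {S. S \<subseteq> {..<n} - {i} \<and> card S = 2 ^ j - 1}"
  by (simp add: Pfam_def)

lemma informative_many:
  assumes th1: "0.1 * eps\<^sup>2 / (\<alpha> * sqrt n) \<le> 0.2 * score_ij n f Srch True i t"
    and p1: "score_ij n f Srch True i t > 0"
    and th2: "0.1 * eps\<^sup>2 / (\<beta> * sqrt n) \<le> 0.2 * score_ij n f Srch False i r"
    and p2: "score_ij n f Srch False i r > 0"
    and rt: "r \<le> t"
  shows "real (card {S'. informative n f Srch eps \<alpha> \<beta> t r i S'}) \<ge> 49/144 * real (card (Pfam n i t))"
proof -
  define \<theta>1 where "\<theta>1 = 0.1 * eps\<^sup>2 / (\<alpha> * sqrt n)"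
  define \<theta>2 where "\<theta>2 = 0.1 * eps\<^sup>2 / (\<beta> * sqrt n)"
  define A where "A = {..<n} - {i}"
  define a where "a = (2::nat) ^ r - 1"
  define Pt where "Pt = Pfam n i t"
  define Gd where "Gd = {T\<in>Pfam n i r. \<not> good_frac n f Srch False i T < \<theta>2}"
  define B1 where "B1 = {S\<in>Pt. good_frac n f Srch True i S < \<theta>1}"
  define B2 where "B2 = {S \<in> {S. S \<subseteq> A \<and> card S = 2 ^ t - 1}. real (card {T\<in>Gd. T \<subseteq> S}) < 0.1 * real (card {T. T \<subseteq> S \<and> card T = a})}"
  have fA: "finite A" by (simp add: A_def)
  have aM: "a \<le> 2 ^ t - 1" unfolding a_def using rt by (simp add: diff_le_mono power_increasing)
  have PtA: "Pt = {S. S \<subseteq> A \<and> card S = 2 ^ t - 1}" by (simp add: Pt_def Pfam_def A_def)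
  have PrA: "Pfam n i r = {T. T \<subseteq> A \<and> card T = a}" by (simp add: Pfam_def A_def a_def)
  have fPt: "finite Pt" by (simp add: Pt_def finite_Pfam)
  have cB1: "real (card B1) \<le> 5/16 * real (card Pt)"
    unfolding B1_def Pt_def by (rule frac_bad) (use th1 p1 \<theta>1_def in auto)
  have "Pfam n i r - Gd = {T\<in>Pfam n i r. good_frac n f Srch False i T < \<theta>2}" by (auto simp: Gd_def)
  then have cbad: "real (card (Pfam n i r - Gd)) \<le> 5/16 * real (card (Pfam n i r))"
    using frac_bad[of \<theta>2 n f Srch False i r] th2 p2 \<theta>2_def by simp
  have cB2: "real (card B2) \<le> 25/72 * real (card Pt)"
    unfolding B2_def PtA
    by (rule cond2_bad[OF fA aM]) (use cbad PrA Gd_def in auto)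
  have sub: "Pt - B1 - B2 \<subseteq> {S'. informative n f Srch eps \<alpha> \<beta> t r i S'}"
  proof
    fix S assume S: "S \<in> Pt - B1 - B2"
    have SA: "S \<subseteq> A" "card S = 2 ^ t - 1" using S PtA by auto
    have "{T. T \<subseteq> S \<and> card T = 2 ^ r - 1 \<and> good_frac n f Srch False i T \<ge> \<theta>2} = {T\<in>Gd. T \<subseteq> S}"
      using SA by (auto simp: Gd_def Pfam_def A_def)
    moreover have "\<not> real (card {T\<in>Gd. T \<subseteq> S}) < 0.1 * real (card {T. T \<subseteq> S \<and> card T = a})"
      using S SA unfolding B2_def by auto
    ultimately show "S \<in> {S'. informative n f Srch eps \<alpha> \<beta> t r i S'}"
      using S unfolding informative_def B1_def \<theta>1_def \<theta>2_def a_def Pt_def by auto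
  qed
  have "real (card Pt) - real (card B1) - real (card B2) \<le> real (card (Pt - B1 - B2))"
  proof -
    have "card Pt \<le> card (Pt - B1 - B2) + card B1 + card B2"
    proof -
      have "Pt \<subseteq> (Pt - B1 - B2) \<union> B1 \<union> B2" by auto
      then have "card Pt \<le> card ((Pt - B1 - B2) \<union> B1 \<union> B2)"
      proof (rule card_mono[rotated])
        have "B1 \<subseteq> Pt" "B2 \<subseteq> Pt" by (auto simp: B1_def B2_def PtA)
        then show "finite (Pt - B1 - B2 \<union> B1 \<union> B2)" using fPt finite_subset by auto
      qed
      also have "\<dots> \<le> card (Pt - B1 - B2) + card B1 + card B2"
        by (metis card_Un_le add_le_mono order_refl order_trans)
      finally show ?thesis .
    qed
    then show ?thesis by linarith
  qed
  also have "\<dots> \<le> real (card {S'. informative n f Srch eps \<alpha> \<beta> t r i S'})"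
  proof -
    have "{S'. informative n f Srch eps \<alpha> \<beta> t r i S'} \<subseteq> Pt" by (auto simp: informative_def Pt_def)
    then have "finite {S'. informative n f Srch eps \<alpha> \<beta> t r i S'}" using fPt finite_subset by blast
    then show ?thesis using sub card_mono by (simp add: card_mono)
  qed
  finally show ?thesis using cB1 cB2 unfolding Pt_def by linarith
qed

lemma cnt1:
  assumes "i < n" "1 \<le> m"
  shows "card {S \<in> {S. S \<subseteq> {..<n} \<and> card S = m}. i \<in> S} = (n - 1) choose (m - 1)"
proof -
  have "{S \<in> {S. S \<subseteq> {..<n} \<and> card S = m}. i \<in> S} = {S. S \<subseteq> {..<n} \<and> card S = m \<and> {i} \<subseteq> S}" by auto
  then show ?thesis using count_super[of "{..<n}" "{i}" 1 m] assms by simp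
qed

lemma cnt2:
  assumes "i < n" "j < n" "i \<noteq> j" "2 \<le> m"
  shows "card {S \<in> {S. S \<subseteq> {..<n} \<and> card S = m}. i \<in> S \<and> j \<in> S} = (n - 2) choose (m - 2)"
proof -
  have "{S \<in> {S. S \<subseteq> {..<n} \<and> card S = m}. i \<in> S \<and> j \<in> S} = {S. S \<subseteq> {..<n} \<and> card S = m \<and> {i,j} \<subseteq> S}" by auto
  then show ?thesis using count_super[of "{..<n}" "{i,j}" 2 m] assms by simp
qed

lemma sumY:
  assumes "I \<subseteq> {..<n}" "1 \<le> m"
  shows "(\<Sum>S\<in>{S. S \<subseteq> {..<n} \<and> card S = m}. real (card (I \<inter> S))) = real (card I) * real ((n - 1) choose (m - 1))"
proof -
  define F where "F = {S. S \<subseteq> {..<n} \<and> card S = m}"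
  have fF: "finite F" by (simp add: F_def)
  have fI: "finite I" using assms finite_subset by blast
  have "(\<Sum>S\<in>F. real (card (I \<inter> S))) = (\<Sum>S\<in>F. real (card {i\<in>I. i \<in> S}))"
    by (rule sum.cong) (auto simp: Int_def)
  also have "\<dots> = (\<Sum>i\<in>I. real (card {S\<in>F. i \<in> S}))" by (rule dc[OF fF fI])
  also have "\<dots> = (\<Sum>i\<in>I. real ((n - 1) choose (m - 1)))"
    by (rule sum.cong) (use assms cnt1 in \<open>auto simp: F_def\<close>)
  finally show ?thesis by (simp add: F_def)
qed

lemma sumY2:
  assumes "I \<subseteq> {..<n}" "2 \<le> m"
  shows "(\<Sum>S\<in>{S. S \<subseteq> {..<n} \<and> card S = m}. real (card (I \<inter> S)) ^ 2)
     = real (card I) * real ((n - 1) choose (m - 1)) + real (card I) * (real (card I) - 1) * real ((n - 2) choose (m - 2))"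
proof -
  define F where "F = {S. S \<subseteq> {..<n} \<and> card S = m}"
  define C1 where "C1 = real ((n - 1) choose (m - 1))"
  define C2 where "C2 = real ((n - 2) choose (m - 2))"
  have fF: "finite F" by (simp add: F_def)
  have fI: "finite I" using assms finite_subset by blast
  have "(\<Sum>S\<in>F. real (card (I \<inter> S)) ^ 2) = (\<Sum>S\<in>F. real (card {p\<in>I \<times> I. fst p \<in> S \<and> snd p \<in> S}))"
  proof (rule sum.cong)
    fix S assume "S \<in> F"
    have "{p\<in>I \<times> I. fst p \<in> S \<and> snd p \<in> S} = (I \<inter> S) \<times> (I \<inter> S)" by auto
    then show "real (card (I \<inter> S)) ^ 2 = real (card {p\<in>I \<times> I. fst p \<in> S \<and> snd p \<in> S})"
      by (simp add: card_cartesian_product power2_eq_square)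
  qed simp
  also have "\<dots> = (\<Sum>p\<in>I \<times> I. real (card {S\<in>F. fst p \<in> S \<and> snd p \<in> S}))"
    by (rule dc) (use fF fI in auto)
  also have "\<dots> = (\<Sum>p\<in>I \<times> I. if fst p = snd p then C1 else C2)"
  proof (rule sum.cong)
    fix p assume p: "p \<in> I \<times> I"
    show "real (card {S\<in>F. fst p \<in> S \<and> snd p \<in> S}) = (if fst p = snd p then C1 else C2)"
    proof (cases "fst p = snd p")
      case True
      then show ?thesis using cnt1[of "fst p" n m] p assms by (auto simp: F_def C1_def)
    next
      case False
      then show ?thesis using cnt2[of "fst p" n "snd p" m] p assms by (force simp: F_def C2_def)
    qed
  qed simp
  also have "\<dots> = (\<Sum>i\<in>I. \<Sum>j\<in>I. if i = j then C1 else C2)"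
    by (simp add: sum.cartesian_product case_prod_beta)
  also have "\<dots> = (\<Sum>i\<in>I. C1 + (real (card I) - 1) * C2)"
  proof (rule sum.cong)
    fix i assume i: "i \<in> I"
    have "(\<Sum>j\<in>I. if i = j then C1 else C2) = (if i = i then C1 else C2) + (\<Sum>j\<in>I - {i}. if i = j then C1 else C2)"
      using fI i by (rule sum.remove)
    also have "(\<Sum>j\<in>I - {i}. if i = j then C1 else C2) = (\<Sum>j\<in>I - {i}. C2)" by (rule sum.cong) auto
    also have "\<dots> = (real (card I) - 1) * C2"
    proof -
      have "card I \<ge> 1" using fI i by (metis One_nat_def Suc_leI card_gt_0_iff empty_iff)
      then show ?thesis using fI i by (simp add: of_nat_diff)
    qed
    finally show "(\<Sum>j\<in>I. if i = j then C1 else C2) = C1 + (real (card I) - 1) * C2" by simp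
  qed simp
  finally show ?thesis by (simp add: F_def C1_def C2_def algebra_simps)
qed

lemma card_Pfam: "i < n \<Longrightarrow> card (Pfam n i j) = (n - 1) choose (2 ^ j - 1)"
  by (simp add: Pfam_def n_subsets)

lemma bij_inf:
  assumes "i < n"
  shows "card {S \<in> {S. S \<subseteq> {..<n} \<and> card S = 2 ^ t}. i \<in> S \<and> informative n f Srch eps \<alpha> \<beta> t r i (S - {i})}
   = card {S'. informative n f Srch eps \<alpha> \<beta> t r i S'}"
proof -
  have "bij_betw (\<lambda>S'. insert i S') {S'. informative n f Srch eps \<alpha> \<beta> t r i S'}
     {S \<in> {S. S \<subseteq> {..<n} \<and> card S = 2 ^ t}. i \<in> S \<and> informative n f Srch eps \<alpha> \<beta> t r i (S - {i})}"
  proof (rule bij_betw_byWitness[where f' = "\<lambda>S. S - {i}"])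
    show "\<forall>a\<in>{S'. informative n f Srch eps \<alpha> \<beta> t r i S'}. insert i a - {i} = a"
      by (auto simp: informative_def Pfam_def)
    show "\<forall>a\<in>{S \<in> {S. S \<subseteq> {..<n} \<and> card S = 2 ^ t}. i \<in> S \<and> informative n f Srch eps \<alpha> \<beta> t r i (S - {i})}. insert i (a - {i}) = a"
      by auto
    show "(\<lambda>S. S - {i}) ` {S \<in> {S. S \<subseteq> {..<n} \<and> card S = 2 ^ t}. i \<in> S \<and> informative n f Srch eps \<alpha> \<beta> t r i (S - {i})}
      \<subseteq> {S'. informative n f Srch eps \<alpha> \<beta> t r i S'}" by auto
    show "(\<lambda>S'. insert i S') ` {S'. informative n f Srch eps \<alpha> \<beta> t r i S'}
      \<subseteq> {S \<in> {S. S \<subseteq> {..<n} \<and> card S = 2 ^ t}. i \<in> S \<and> informative n f Srch eps \<alpha> \<beta> t r i (S - {i})}"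
    proof
      fix S assume "S \<in> (\<lambda>S'. insert i S') ` {S'. informative n f Srch eps \<alpha> \<beta> t r i S'}"
      then obtain S' where S': "informative n f Srch eps \<alpha> \<beta> t r i S'" and SS: "S = insert i S'" by auto
      have P: "S' \<subseteq> {..<n} - {i}" "card S' = 2 ^ t - 1" using S' by (auto simp: informative_def Pfam_def)
      have fS': "finite S'" using P(1) finite_subset by blast
      have iS': "i \<notin> S'" using P by auto
      have "card S = 2 ^ t" using SS fS' iS' P(2) by simp
      moreover have "S - {i} = S'" using SS iS' by auto
      moreover have "S \<subseteq> {..<n}" using SS P(1) assms by auto
      ultimately show "S \<in> {S \<in> {S. S \<subseteq> {..<n} \<and> card S = 2 ^ t}. i \<in> S \<and> informative n f Srch eps \<alpha> \<beta> t r i (S - {i})}"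
        using SS S' by simp
    qed
  qed
  from bij_betw_same_card[OF this] show ?thesis by simp
qed

lemma point_bound:
  fixes x y \<alpha> :: real
  assumes a: "\<alpha> > 0" and xy: "0 \<le> x" "x \<le> y" and nG: "\<not> (\<alpha>/10 \<le> x \<and> x \<le> 4 * \<alpha>)"
  shows "x \<le> \<alpha>/10 + 4 / (9 * \<alpha>) * (y - \<alpha>)\<^sup>2"
proof (cases "x < \<alpha>/10")
  case True
  have "0 \<le> 4 / (9 * \<alpha>) * (y - \<alpha>)\<^sup>2" using a by simp
  then show ?thesis using True by linarith
next
  case False
  then have x4: "x > 4 * \<alpha>" using nG by linarith
  then have y4: "y > 4 * \<alpha>" using xy by linarith
  have "y - \<alpha> \<ge> 3/4 * y" using y4 by linarith
  moreover have "3/4 * y \<ge> 0" using y4 a by linarith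
  ultimately have "(y - \<alpha>)\<^sup>2 \<ge> (3/4 * y)\<^sup>2" by (intro power_mono) auto
  moreover have "(3/4 * y)\<^sup>2 = 9/16 * y * y" by (simp add: power2_eq_square)
  moreover have "9/16 * y * y \<ge> 9/16 * y * (4 * \<alpha>)" using y4 a by (intro mult_left_mono) auto
  moreover have "9/16 * y * (4 * \<alpha>) = 9/4 * \<alpha> * y" by simp
  ultimately have "(y - \<alpha>)\<^sup>2 \<ge> 9/4 * \<alpha> * y" by linarith
  then have "4 / (9 * \<alpha>) * (y - \<alpha>)\<^sup>2 \<ge> 4 / (9 * \<alpha>) * (9/4 * \<alpha> * y)"
    using a by (intro mult_left_mono) auto
  moreover have "4 / (9 * \<alpha>) * (9/4 * \<alpha> * y) = y" using a by (simp add: field_simps)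
  ultimately show ?thesis using xy a by (smt (verit) divide_nonneg_pos)
qed

lemma final_ineq:
  fixes Xs Ys :: "'a \<Rightarrow> real"
  assumes fF: "finite F" and Fne: "F \<noteq> {}" and a16: "\<alpha> \<ge> 16"
    and sX: "(\<Sum>S\<in>F. Xs S) \<ge> 49/144 * \<alpha> * real (card F)"
    and sY: "(\<Sum>S\<in>F. (Ys S - \<alpha>)\<^sup>2) \<le> \<alpha> * real (card F)"
    and XY: "\<forall>S\<in>F. 0 \<le> Xs S \<and> Xs S \<le> Ys S"
  shows "real (card {S\<in>F. \<alpha>/10 \<le> Xs S \<and> Xs S \<le> 4 * \<alpha>}) / real (card F) \<ge> 1/20"
proof -
  define G where "G = {S\<in>F. \<alpha>/10 \<le> Xs S \<and> Xs S \<le> 4 * \<alpha>}"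
  have apos: "\<alpha> > 0" using a16 by simp
  have pw: "Xs S \<le> (if \<alpha>/10 \<le> Xs S \<and> Xs S \<le> 4 * \<alpha> then 4 * \<alpha> else 0) + (\<alpha>/10 + 4 / (9 * \<alpha>) * (Ys S - \<alpha>)\<^sup>2)"
    if "S \<in> F" for S
  proof (cases "\<alpha>/10 \<le> Xs S \<and> Xs S \<le> 4 * \<alpha>")
    case True
    have "0 \<le> 4 / (9 * \<alpha>) * (Ys S - \<alpha>)\<^sup>2" using apos by simp
    moreover have "(if \<alpha>/10 \<le> Xs S \<and> Xs S \<le> 4 * \<alpha> then 4 * \<alpha> else 0) = 4 * \<alpha>" using True by simp
    ultimately show ?thesis using True apos by linarith
  next
    case False
    then show ?thesis using point_bound[OF apos, of "Xs S" "Ys S"] XY that by simp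
  qed
  have "(\<Sum>S\<in>F. Xs S) \<le> (\<Sum>S\<in>F. (if \<alpha>/10 \<le> Xs S \<and> Xs S \<le> 4 * \<alpha> then 4 * \<alpha> else 0) + (\<alpha>/10 + 4 / (9 * \<alpha>) * (Ys S - \<alpha>)\<^sup>2))"
    by (rule sum_mono) (use pw in auto)
  also have "\<dots> = 4 * \<alpha> * real (card G) + (\<alpha>/10 * real (card F) + 4 / (9 * \<alpha>) * (\<Sum>S\<in>F. (Ys S - \<alpha>)\<^sup>2))"
  proof -
    have "(\<Sum>S\<in>F. (if \<alpha>/10 \<le> Xs S \<and> Xs S \<le> 4 * \<alpha> then 4 * \<alpha> else 0)) = 4 * \<alpha> * (\<Sum>S\<in>F. (if \<alpha>/10 \<le> Xs S \<and> Xs S \<le> 4 * \<alpha> then 1 else 0))"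
      by (simp add: sum_distrib_left if_distrib cong: if_cong)
    also have "\<dots> = 4 * \<alpha> * real (card G)" unfolding G_def using card_filter_sum[OF fF] by simp
    finally show ?thesis by (simp add: sum.distrib sum_distrib_left)
  qed
  also have "4 / (9 * \<alpha>) * (\<Sum>S\<in>F. (Ys S - \<alpha>)\<^sup>2) \<le> 4 / (9 * \<alpha>) * (\<alpha> * real (card F))"
    using sY apos by (intro mult_left_mono) auto
  finally have "49/144 * \<alpha> * real (card F) \<le> 4 * \<alpha> * real (card G) + (\<alpha>/10 * real (card F) + 4/9 * real (card F))"
    using sX apos by (simp add: field_simps)
  moreover have "4/9 * real (card F) \<le> \<alpha> / 36 * real (card F)" using a16 by (intro mult_right_mono) auto
  ultimately have "(49/144 - 1/10 - 1/36) * \<alpha> * real (card F) \<le> 4 * \<alpha> * real (card G)"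
    by (simp add: algebra_simps)
  then have "(49/144 - 1/10 - 1/36) * real (card F) \<le> 4 * real (card G)" using apos by (simp add: mult.assoc mult.left_commute[of \<alpha>])
  moreover have "real (card F) > 0" using fF Fne by (simp add: card_gt_0_iff)
  ultimately show ?thesis unfolding G_def[symmetric] by (simp add: field_simps)
qed

lemma thr:
  fixes eps H k n m sc :: real
  assumes "eps > 0" "H > 0" "k \<ge> H * eps\<^sup>2 / 2" "n > 0" "m > 0" "sc * m / sqrt n \<ge> 1 / H"
  shows "0.1 * eps\<^sup>2 / ((k * m / n) * sqrt n) \<le> 0.2 * sc"
proof -
  have sn: "sqrt n > 0" using assms by simp
  have sc: "sc \<ge> sqrt n / (H * m)" using assms(6) sn assms by (simp add: field_simps)
  have kpos: "k > 0" using assms by (smt (verit) mult_pos_pos zero_less_power divide_pos_pos)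
  have "0.1 * eps\<^sup>2 / ((k * m / n) * sqrt n) = 0.1 * eps\<^sup>2 * sqrt n / (k * m)"
    using sn assms kpos by (simp add: field_simps)
  also have "\<dots> \<le> 0.1 * eps\<^sup>2 * sqrt n / ((H * eps\<^sup>2 / 2) * m)"
    using assms sn kpos by (intro divide_left_mono mult_right_mono mult_pos_pos) auto
  also have "\<dots> = 0.2 * (sqrt n / (H * m))" using assms by (simp add: field_simps)
  also have "\<dots> \<le> 0.2 * sc" using sc by simp
  finally show ?thesis .
qed

lemma main_core:
  fixes n \<Lambda> :: nat and f :: "nat set \<Rightarrow> bool" and Srch :: "nat set \<Rightarrow> nat set \<Rightarrow> nat option pmf"
    and eps :: real and t r H :: nat and I :: "nat set"
  assumes n16: "n \<ge> 16"
    and h1: "1 \<le> \<Lambda>" and h2: "2 ^ \<Lambda> \<le> n"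
    and heps: "eps > 0" and ht: "t \<in> {1..\<Lambda>}" and hr: "r \<in> {1..\<Lambda>}" and rt: "r \<le> t"
    and hH: "\<exists>k. H = 2 ^ k"
    and hI: "I \<subseteq> {..<n}" and hIne: "I \<noteq> {}" and hIcard: "real (card I) \<ge> real H * eps\<^sup>2 / 2"
    and hsc: "\<forall>i \<in> I.
        min (score_i n \<Lambda> f Srch True i) (score_i n \<Lambda> f Srch False i)
          = min (score_ij n f Srch True i t * 2 ^ t / sqrt (real n))
                (score_ij n f Srch False i r * 2 ^ r / sqrt (real n)) \<and>
        min (score_i n \<Lambda> f Srch True i) (score_i n \<Lambda> f Srch False i) \<in> {1 / real H .. 2 / real H}"
    and hal: "real (card I) * 2 ^ t / real n \<ge> (log 2 (real n))\<^sup>2"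
  shows "(let \<alpha> = real (card I) * 2 ^ t / real n;
         \<beta> = real (card I) * 2 ^ r / real n
     in real (card {S. S \<subseteq> {..<n} \<and> card S = 2 ^ t \<and>
                      \<alpha> / 10 \<le> real (card (informative_set n f Srch eps \<alpha> \<beta> t r I S)) \<and>
                      real (card (informative_set n f Srch eps \<alpha> \<beta> t r I S)) \<le> 4 * \<alpha>})
          / real (n choose 2 ^ t) \<ge> 1/20)"
proof -
  define k where "k = real (card I)"
  define m :: nat where "m = 2 ^ t"
  define \<alpha> where "\<alpha> = real (card I) * 2 ^ t / real n"
  define \<beta> where "\<beta> = real (card I) * 2 ^ r / real n"
  define F where "F = {S. S \<subseteq> {..<n} \<and> card S = m}"
  define C1 where "C1 = real ((n - 1) choose (m - 1))"
  define C2 where "C2 = real ((n - 2) choose (m - 2))"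
  define M where "M = real (card F)"
  have fF: "finite F" by (simp add: F_def)
  have MF: "card F = n choose m" by (simp add: F_def n_subsets)
  have m2: "m \<ge> 2" using ht by (simp add: m_def) (metis One_nat_def le_trans power_increasing_iff power_one_right one_less_numeral_iff semiring_norm(76))
  have mn: "m \<le> n" using ht h2 by (simp add: m_def) (meson le_trans one_le_numeral power_increasing)
  have npos: "real n > 0" using n16 by simp
  have Hpos: "real H > 0" using hH by auto
  have fI: "finite I" using hI finite_subset by blast
  have kpos: "k \<ge> 1" using fI hIne by (simp add: k_def Suc_leI card_gt_0_iff)
  have inf_i: "real (card {S'. informative n f Srch eps \<alpha> \<beta> t r i S'}) \<ge> 49/144 * C1" if iI: "i \<in> I" for i
  proof -
    have mm: "min (score_ij n f Srch True i t * 2 ^ t / sqrt (real n))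
                (score_ij n f Srch False i r * 2 ^ r / sqrt (real n)) \<ge> 1 / real H"
      using hsc iI by auto
    have a1: "score_ij n f Srch True i t * 2 ^ t / sqrt (real n) \<ge> 1 / real H" using mm by linarith
    have a2: "score_ij n f Srch False i r * 2 ^ r / sqrt (real n) \<ge> 1 / real H" using mm by linarith
    have sp: "sqrt (real n) > 0" using npos by simp
    have p1: "score_ij n f Srch True i t > 0"
    proof (rule ccontr)
      assume "\<not> ?thesis"
      then have "score_ij n f Srch True i t * 2 ^ t / sqrt (real n) \<le> 0"
        using sp by (simp add: divide_nonpos_pos mult_nonpos_nonneg)
      then show False using a1 Hpos by (smt (verit) divide_pos_pos)
    qed
    have p2: "score_ij n f Srch False i r > 0"
    proof (rule ccontr)
      assume "\<not> ?thesis"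
      then have "score_ij n f Srch False i r * 2 ^ r / sqrt (real n) \<le> 0"
        using sp by (simp add: divide_nonpos_pos mult_nonpos_nonneg)
      then show False using a2 Hpos by (smt (verit) divide_pos_pos)
    qed
    have th1: "0.1 * eps\<^sup>2 / (\<alpha> * sqrt n) \<le> 0.2 * score_ij n f Srch True i t"
      unfolding \<alpha>_def by (rule thr) (use heps Hpos hIcard npos a1 in auto)
    have th2: "0.1 * eps\<^sup>2 / (\<beta> * sqrt n) \<le> 0.2 * score_ij n f Srch False i r"
      unfolding \<beta>_def by (rule thr) (use heps Hpos hIcard npos a2 in auto)
    have "real (card {S'. informative n f Srch eps \<alpha> \<beta> t r i S'}) \<ge> 49/144 * real (card (Pfam n i t))"
      by (rule informative_many[OF th1 p1 th2 p2 rt])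
    moreover have "card (Pfam n i t) = (n - 1) choose (m - 1)" using iI hI card_Pfam m_def by auto
    ultimately show ?thesis by (simp add: C1_def)
  qed
  define Xs where "Xs = (\<lambda>S. real (card (informative_set n f Srch eps \<alpha> \<beta> t r I S)))"
  define Ys where "Ys = (\<lambda>S. real (card (I \<inter> S)))"
  have "(\<Sum>S\<in>F. Xs S) = (\<Sum>S\<in>F. real (card {i\<in>I. i \<in> S \<and> informative n f Srch eps \<alpha> \<beta> t r i (S - {i})}))"
  proof (rule sum.cong)
    fix S assume "S \<in> F"
    then have "informative_set n f Srch eps \<alpha> \<beta> t r I S = {i\<in>I. i \<in> S \<and> informative n f Srch eps \<alpha> \<beta> t r i (S - {i})}"
      by (auto simp: informative_set_def i_informative_def F_def m_def)
    then show "Xs S = real (card {i\<in>I. i \<in> S \<and> informative n f Srch eps \<alpha> \<beta> t r i (S - {i})})"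
      by (simp add: Xs_def)
  qed simp
  also have "\<dots> = (\<Sum>i\<in>I. real (card {S\<in>F. i \<in> S \<and> informative n f Srch eps \<alpha> \<beta> t r i (S - {i})}))"
    by (rule dc[OF fF fI])
  also have "\<dots> = (\<Sum>i\<in>I. real (card {S'. informative n f Srch eps \<alpha> \<beta> t r i S'}))"
    by (rule sum.cong) (use bij_inf hI in \<open>auto simp: F_def m_def\<close>)
  also have "\<dots> \<ge> (\<Sum>i\<in>I. 49/144 * C1)" by (rule sum_mono) (use inf_i in auto)
  finally have sX0: "(\<Sum>S\<in>F. Xs S) \<ge> 49/144 * k * C1" by (simp add: k_def)
  have b1: "real m * M = real n * C1"
  proof -
    have "Suc (m - 1) * (n choose Suc (m - 1)) = n * ((n - 1) choose (m - 1))" by (rule binomial_absorption)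
    then have "m * (n choose m) = n * ((n - 1) choose (m - 1))" using m2 by simp
    then show ?thesis unfolding M_def C1_def MF by (metis of_nat_mult)
  qed
  have b2: "(real m - 1) * C1 = (real n - 1) * C2"
  proof -
    have "Suc (m - 2) * ((n - 1) choose Suc (m - 2)) = (n - 1) * ((n - 1 - 1) choose (m - 2))" by (rule binomial_absorption)
    moreover have "Suc (m - 2) = m - 1" using m2 by simp
    moreover have "n - 1 - 1 = n - 2" by simp
    ultimately have "(m - 1) * ((n - 1) choose (m - 1)) = (n - 1) * ((n - 2) choose (m - 2))" by simp
    then have "real ((m - 1) * ((n - 1) choose (m - 1))) = real ((n - 1) * ((n - 2) choose (m - 2)))" by simp
    then show ?thesis unfolding C1_def C2_def using m2 n16 by (simp add: of_nat_diff)
  qed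
  have aM: "\<alpha> * M = k * C1"
  proof -
    have "\<alpha> * M = k * (real m * M) / real n" by (simp add: \<alpha>_def k_def m_def)
    also have "\<dots> = k * C1" using b1 npos by simp
    finally show ?thesis .
  qed
  have sX: "(\<Sum>S\<in>F. Xs S) \<ge> 49/144 * \<alpha> * real (card F)"
    using sX0 aM by (simp add: M_def mult.assoc)
  have sY1: "(\<Sum>S\<in>F. Ys S) = \<alpha> * M"
    using sumY[OF hI, of m] m2 aM by (simp add: Ys_def F_def k_def C1_def)
  have sY2: "(\<Sum>S\<in>F. (Ys S)\<^sup>2) = k * C1 + k * (k - 1) * C2"
    using sumY2[OF hI m2] by (simp add: Ys_def F_def k_def C1_def C2_def)
  have kC2: "k * (k - 1) * C2 \<le> \<alpha>\<^sup>2 * M"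
  proof -
    have kn: "k \<le> real n" using card_mono[OF _ hI] by (simp add: k_def)
    have f1: "k * real n - k * real m \<ge> 0" using kn mn kpos
      by (metis diff_ge_0_iff_ge mult_left_mono of_nat_le_iff order_trans zero_le_one)
    have f2: "real n * real m - real n \<ge> 0" using m2 npos
      by (metis diff_ge_0_iff_ge mult.right_neutral mult_left_mono of_nat_0_le_iff one_le_numeral order_trans of_nat_le_iff of_nat_1 numeral_le_iff)
    have key: "(k - 1) * (real m - 1) * real n \<le> k * real m * (real n - 1)"
      using f1 f2 by (simp add: algebra_simps)
    have C1nn: "C1 \<ge> 0" by (simp add: C1_def)
    have n1: "real n - 1 > 0" using n16 by simp
    have "k * (k - 1) * C2 * (real n - 1) * real n = k * (k - 1) * real n * ((real n - 1) * C2)"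
      by (simp add: algebra_simps)
    also have "\<dots> = k * (k - 1) * real n * ((real m - 1) * C1)" using b2 by simp
    also have "\<dots> = k * ((k - 1) * (real m - 1) * real n) * C1" by (simp add: algebra_simps)
    also have "\<dots> \<le> k * (k * real m * (real n - 1)) * C1"
      using key kpos C1nn by (intro mult_right_mono mult_left_mono) auto
    also have "\<dots> = \<alpha>\<^sup>2 * M * (real n - 1) * real n"
    proof -
      have e1: "\<alpha> * real n = k * real m" using npos by (simp add: \<alpha>_def k_def m_def)
      have "\<alpha>\<^sup>2 * M * (real n - 1) * real n = (\<alpha> * M) * (\<alpha> * real n) * (real n - 1)"
        by (simp add: power2_eq_square algebra_simps)
      also have "\<dots> = (k * C1) * (k * real m) * (real n - 1)" using aM e1 by simp
      finally show ?thesis by (simp add: algebra_simps)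
    qed
    finally have "k * (k - 1) * C2 * ((real n - 1) * real n) \<le> \<alpha>\<^sup>2 * M * ((real n - 1) * real n)"
      by (simp add: mult.assoc)
    then show ?thesis using n1 npos by (simp add: mult_le_cancel_right)
  qed
  have sY: "(\<Sum>S\<in>F. (Ys S - \<alpha>)\<^sup>2) \<le> \<alpha> * real (card F)"
  proof -
    have "(\<Sum>S\<in>F. (Ys S - \<alpha>)\<^sup>2) = (\<Sum>S\<in>F. (Ys S)\<^sup>2 + (- 2 * \<alpha>) * Ys S + \<alpha>\<^sup>2)"
      by (rule sum.cong) (simp_all add: power2_diff algebra_simps)
    also have "\<dots> = (\<Sum>S\<in>F. (Ys S)\<^sup>2) + (- 2 * \<alpha>) * (\<Sum>S\<in>F. Ys S) + \<alpha>\<^sup>2 * M"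
      by (simp only: sum.distrib sum_distrib_left[symmetric] sum_constant M_def) (simp add: mult.commute)
    finally have "(\<Sum>S\<in>F. (Ys S - \<alpha>)\<^sup>2) = (\<Sum>S\<in>F. (Ys S)\<^sup>2) - 2 * \<alpha> * (\<Sum>S\<in>F. Ys S) + \<alpha>\<^sup>2 * M"
      by simp
    then show ?thesis using sY1 sY2 kC2 aM by (simp add: M_def power2_eq_square algebra_simps)
  qed
  have XY: "\<forall>S\<in>F. 0 \<le> Xs S \<and> Xs S \<le> Ys S"
  proof
    fix S assume "S \<in> F"
    have "informative_set n f Srch eps \<alpha> \<beta> t r I S \<subseteq> I \<inter> S" by (auto simp: informative_set_def)
    then show "0 \<le> Xs S \<and> Xs S \<le> Ys S" using fI by (simp add: Xs_def Ys_def card_mono)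
  qed
  have a16: "\<alpha> \<ge> 16"
  proof -
    have "log 2 (real n) \<ge> log 2 16" using n16 by simp
    moreover have "log 2 (16::real) = 4"
    proof -
      have "log 2 ((2::real) ^ (4::nat)) = real (4::nat)" by (rule log_pow_cancel) auto
      then show ?thesis by simp
    qed
    ultimately have "log 2 (real n) \<ge> 4" by simp
    then have "(log 2 (real n))\<^sup>2 \<ge> 4\<^sup>2" by (intro power_mono) auto
    then show ?thesis using hal by (simp add: \<alpha>_def)
  qed
  have Fne: "F \<noteq> {}" using MF mn by (metis card.empty zero_less_binomial_iff less_numeral_extra(3))
  have "real (card {S\<in>F. \<alpha>/10 \<le> Xs S \<and> Xs S \<le> 4 * \<alpha>}) / real (card F) \<ge> 1/20"
    by (rule final_ineq[OF fF Fne a16 sX sY XY])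
  moreover have "{S\<in>F. \<alpha>/10 \<le> Xs S \<and> Xs S \<le> 4 * \<alpha>} = {S. S \<subseteq> {..<n} \<and> card S = 2 ^ t \<and>
                      \<alpha> / 10 \<le> real (card (informative_set n f Srch eps \<alpha> \<beta> t r I S)) \<and>
                      real (card (informative_set n f Srch eps \<alpha> \<beta> t r I S)) \<le> 4 * \<alpha>}"
    by (auto simp: F_def Xs_def m_def)
  ultimately show ?thesis using MF unfolding Let_def \<alpha>_def[symmetric] \<beta>_def[symmetric] m_def by simp
qed


theorem mainTheorem2:
  shows "\<forall>CH::real > 0. \<forall>C\<Lambda>::real > 0. \<exists>c::real > 0. \<exists>N::nat. \<forall>n \<ge> N.
    \<forall>(\<Lambda>::nat) (f::nat set \<Rightarrow> bool) (Srch::nat set \<Rightarrow> nat set \<Rightarrow> nat option pmf)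
      (eps::real) (t::nat) (r::nat) (H::nat) (I::nat set).
    (1 \<le> \<Lambda> \<and> 2 ^ \<Lambda> \<le> n \<and> real \<Lambda> \<le> C\<Lambda> * log 2 (real n) \<and>
     (\<forall>x S. set_pmf (Srch x S) \<subseteq> insert None (Some ` S)) \<and>
     eps > 0 \<and> t \<in> {1..\<Lambda>} \<and> r \<in> {1..\<Lambda>} \<and> r \<le> t \<and>
     (\<exists>k. H = 2 ^ k) \<and> real H \<le> CH * real n / eps\<^sup>2 \<and>
     real H * 2 ^ t \<ge> sqrt (real n) \<and> real H * 2 ^ r \<ge> sqrt (real n) \<and>
     I \<subseteq> {..<n} \<and> I \<noteq> {} \<and> real (card I) \<ge> real H * eps\<^sup>2 / 2 \<and>
     (\<forall>i \<in> I.
        min (score_i n \<Lambda> f Srch True i) (score_i n \<Lambda> f Srch False i)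
          = min (score_ij n f Srch True i t * 2 ^ t / sqrt (real n))
                (score_ij n f Srch False i r * 2 ^ r / sqrt (real n)) \<and>
        min (score_i n \<Lambda> f Srch True i) (score_i n \<Lambda> f Srch False i) \<in> {1 / real H .. 2 / real H}) \<and>
     real (card I) * 2 ^ t / real n \<ge> (log 2 (real n))\<^sup>2)
    \<longrightarrow>
    (let \<alpha> = real (card I) * 2 ^ t / real n;
         \<beta> = real (card I) * 2 ^ r / real n
     in real (card {S. S \<subseteq> {..<n} \<and> card S = 2 ^ t \<and>
                      \<alpha> / 10 \<le> real (card (informative_set n f Srch eps \<alpha> \<beta> t r I S)) \<and>
                      real (card (informative_set n f Srch eps \<alpha> \<beta> t r I S)) \<le> 4 * \<alpha>})
          / real (n choose 2 ^ t) \<ge> c)"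
    apply (intro allI impI)
  apply (rule exI[of _ "1/20"])
  apply (rule conjI, simp)
  apply (rule exI[of _ 16])
  apply (intro allI impI)
  apply (elim conjE)
  apply (rule main_core)
                apply assumption+
  done

end
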